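(* Let $A\in M_2(\mathbb{Z})$ be an expanding matrix whose characteristic polynomial is $x^2+px+q$ with $p\in\mathbb{Z}$ and $|q|=3$, and let $v\in\mathbb{R}^2$ be such that $\{v,Av\}$ is linearly independent. Then $T(A,\mathcal{D})$ is connected for $\mathcal{D}=\{0,v,Av+v\}$ and for $\mathcal{D}=\{0,v,-Av+v\}$.
   Context: A real square matrix is expanding if all its eigenvalues have modulus strictly larger than $1$. For an expanding matrix $A\in M_n(\mathbb{Z})$ and a finite set $\mathcal{D}\subset\mathbb{R}^n$ with $|\mathcal D|=|\det A|$, the self-affine set $T(A,\mathcal{D})$ is the unique nonempty compact set $T$ with $AT=T+\mathcal{D}$; equivalently $T=\{\sum_{i=1}^\infty A^{-i}d_{j_i}: d_{j_i}\in\mathcal{D}\}$. *)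

theory Defs
  imports "HOL-Analysis.Analysis" "HOL-Computational_Algebra.Polynomial"
begin

text \<open>An integer matrix: all entries are integers.\<close>
definition integer_matrix :: "real^'n^'n \<Rightarrow> bool" where
  "integer_matrix A \<longleftrightarrow> (\<forall>i j. A $ i $ j \<in> \<int>)"

text \<open>Eigenvalues of a real square matrix, taken over the complex numbers.\<close>
definition eigenvalue :: "real^'n^'n \<Rightarrow> complex \<Rightarrow> bool" where
  "eigenvalue A z \<longleftrightarrow>
     (\<exists>w::complex^'n. w \<noteq> 0 \<and> map_matrix complex_of_real A *v w = z *s w)"

text \<open>Expanding: all eigenvalues have modulus strictly larger than 1.\<close>
definition expanding :: "real^'n^'n \<Rightarrow> bool" where
  "expanding A \<longleftrightarrow> (\<forall>z. eigenvalue A z \<longrightarrow> norm z > 1)"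

text \<open>Characteristic polynomial det(xI - A) of a 2x2 real matrix.\<close>
definition charpoly2 :: "real^2^2 \<Rightarrow> real poly" where
  "charpoly2 A = [: A$1$1 * A$2$2 - A$1$2 * A$2$1, - (A$1$1 + A$2$2), 1 :]"

text \<open>The self-affine set T(A,D) = { sum_{i>=1} A^{-i} d_i : d_i in D }.\<close>
definition self_affine :: "real^'n^'n \<Rightarrow> (real^'n) set \<Rightarrow> (real^'n) set" where
  "self_affine A D = {x. \<exists>d::nat \<Rightarrow> real^'n. (\<forall>i. d i \<in> D) \<and>
      (\<lambda>i. (((*v) (matrix_inv A)) ^^ Suc i) (d i)) sums x}"

end

theory Submission
  imports Defs
begin


locale sa =
  fixes L :: "real^2 \<Rightarrow> real^2" and K r :: real
  assumes lin: "linear L" and r0: "0 < r" and r1: "r < 1" and K0: "0 \<le> K"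
    and decay: "\<And>n x. norm ((L^^n) x) \<le> K * r^n * norm x"
begin

definition TS :: "(real^2) set \<Rightarrow> (real^2) set" where
  "TS D = {x. \<exists>d::nat \<Rightarrow> real^2. (\<forall>i. d i \<in> D) \<and> (\<lambda>i. (L ^^ Suc i) (d i)) sums x}"

lemma lin_pow: "linear (L^^n)"
proof (induction n)
  case 0 then show ?case by (simp add: linear_id[unfolded id_def])
next
  case (Suc n) then show ?case using linear_compose[OF Suc.IH lin] by (simp add: o_def)
qed

lemma bl_pow: "bounded_linear (L^^n)"
  using lin_pow linear_conv_bounded_linear by blast

lemma cont_pow: "continuous_on S (L^^n)"
  using lin_pow linear_continuous_on linear_conv_bounded_linear by blast

lemma finite_bound: "finite D \<Longrightarrow> \<exists>M\<ge>0. \<forall>d\<in>D. norm d \<le> M"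
  by (metis finite_imp_bounded bounded_pos less_le)

lemma summ_geo: "summable (\<lambda>i. K * r ^ Suc i * M)"
proof -
  have "summable (\<lambda>i. r ^ i)" using r0 r1 by (intro summable_geometric) auto
  then show ?thesis by (intro summable_mult2 summable_mult) (simp add: summable_Suc_iff)
qed

lemma term_bound:
  assumes "norm y \<le> M" shows "norm ((L ^^ Suc i) y) \<le> K * r ^ Suc i * M"
proof -
  have "norm ((L ^^ Suc i) y) \<le> K * r ^ Suc i * norm y" by (rule decay)
  also have "\<dots> \<le> K * r ^ Suc i * M" using assms K0 r0 by (intro mult_left_mono) auto
  finally show ?thesis .
qed

lemma summable_digits:
  assumes "\<And>i. norm (d i) \<le> M"
  shows "summable (\<lambda>i. (L ^^ Suc i) (d i))"
proof (rule summable_norm_cancel, rule summable_comparison_test[OF _ summ_geo[of M]])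
  show "\<exists>N. \<forall>n\<ge>N. norm (norm ((L ^^ Suc n) (d n))) \<le> K * r ^ Suc n * M"
    using term_bound assms by auto
qed


lemma blL: "bounded_linear L" using lin linear_conv_bounded_linear by blast

lemma powSuc: "(L ^^ Suc i) y = L ((L ^^ i) y)" by simp

lemma TS_step:
  assumes fin: "finite D"
  shows "x \<in> TS D \<longleftrightarrow> (\<exists>d0\<in>D. \<exists>x'\<in>TS D. x = L (x' + d0))"
proof
  assume "x \<in> TS D"
  then obtain d where dD: "\<forall>i. d i \<in> D" and sx: "(\<lambda>i. (L ^^ Suc i) (d i)) sums x"
    unfolding TS_def by blast
  obtain M where M: "\<forall>d\<in>D. norm d \<le> M" using finite_bound[OF fin] by blast
  have "summable (\<lambda>i. (L ^^ Suc i) (d (Suc i)))"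
    using dD M by (intro summable_digits) auto
  then obtain x' where sx': "(\<lambda>i. (L ^^ Suc i) (d (Suc i))) sums x'"
    using summable_sums by blast
  have x'T: "x' \<in> TS D" unfolding TS_def
    by (rule CollectI, rule exI[of _ "\<lambda>i. d (Suc i)"]) (use dD sx' in simp)
  define c where "c i = (L ^^ i) (d i)" for i
  have "(\<lambda>i. c (Suc i)) sums x'" using sx' by (simp add: c_def del: funpow.simps)
  then have "c sums (x' + c 0)" by (simp add: sums_Suc_iff)
  then have "(\<lambda>i. L (c i)) sums L (x' + c 0)" by (rule bounded_linear.sums[OF blL])
  moreover have "c 0 = d 0" by (simp add: c_def)
  ultimately have "(\<lambda>i. L (c i)) sums L (x' + d 0)" by simp
  moreover have "(\<lambda>i. L (c i)) = (\<lambda>i. (L ^^ Suc i) (d i))" by (simp add: c_def)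
  ultimately have "x = L (x' + d 0)" using sx sums_unique2 by simp
  then show "\<exists>d0\<in>D. \<exists>x'\<in>TS D. x = L (x' + d0)" using dD x'T by blast
next
  assume "\<exists>d0\<in>D. \<exists>x'\<in>TS D. x = L (x' + d0)"
  then obtain d0 x' d' where d0: "d0 \<in> D" and x: "x = L (x' + d0)" and dD: "\<forall>i. d' i \<in> D"
    and sx': "(\<lambda>i. (L ^^ Suc i) (d' i)) sums x'" unfolding TS_def by blast
  define d where "d i = (case i of 0 \<Rightarrow> d0 | Suc j \<Rightarrow> d' j)" for i
  define c where "c i = (L ^^ i) (d i)" for i
  have "(\<lambda>i. c (Suc i)) sums x'" using sx' by (simp add: c_def d_def del: funpow.simps)
  then have "c sums (x' + c 0)" by (simp add: sums_Suc_iff)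
  then have "(\<lambda>i. L (c i)) sums L (x' + c 0)" by (rule bounded_linear.sums[OF blL])
  moreover have "c 0 = d0" by (simp add: c_def d_def)
  ultimately have "(\<lambda>i. L (c i)) sums L (x' + d0)" by simp
  moreover have "(\<lambda>i. L (c i)) = (\<lambda>i. (L ^^ Suc i) (d i))" by (simp add: c_def)
  moreover have "\<forall>i. d i \<in> D" using dD d0 by (simp add: d_def split: nat.split)
  ultimately show "x \<in> TS D" unfolding TS_def x
    by (intro CollectI exI[of _ d]) simp
qed

definition Phi :: "(real^2) set \<Rightarrow> (real^2) set \<Rightarrow> (real^2) set" where
  "Phi D X = (\<Union>d\<in>D. (\<lambda>x. L (x + d)) ` X)"

lemma Phi_iff: "x \<in> Phi D X \<longleftrightarrow> (\<exists>d0\<in>D. \<exists>x'\<in>X. x = L (x' + d0))"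
  unfolding Phi_def by blast

lemma TS_fix: assumes "finite D" shows "Phi D (TS D) = TS D"
proof (rule set_eqI)
  fix x show "x \<in> Phi D (TS D) \<longleftrightarrow> x \<in> TS D"
    unfolding Phi_iff by (rule TS_step[OF assms, symmetric])
qed

lemma TS_nonempty: "D \<noteq> {} \<Longrightarrow> finite D \<Longrightarrow> TS D \<noteq> {}"
proof -
  assume "D \<noteq> {}" "finite D"
  then obtain d0 where d0: "d0 \<in> D" by blast
  obtain M where M: "\<forall>d\<in>D. norm d \<le> M" using finite_bound[OF \<open>finite D\<close>] by blast
  have "summable (\<lambda>i. (L ^^ Suc i) d0)" using d0 M by (intro summable_digits) auto
  then show ?thesis unfolding TS_def using d0 summable_sums by fastforce
qed

lemma TS_compact:
  assumes fin: "finite D" shows "compact (TS D)"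
proof -
  obtain M where M: "\<forall>d\<in>D. norm d \<le> M" using finite_bound[OF fin] by blast
  define P where "P = PiE UNIV (\<lambda>_::nat. D)"
  define F where "F d = suminf (\<lambda>i. (L ^^ Suc i) (d i))" for d :: "nat \<Rightarrow> real^2"
  have P: "P = {d. \<forall>i. d i \<in> D}" unfolding P_def PiE_UNIV_domain by auto
  have "compactin (product_topology (\<lambda>i. euclidean) UNIV) P"
    unfolding P_def compactin_PiE using fin finite_imp_compact by auto
  then have cP: "compact P" by (simp add: euclidean_product_topology)
  have ul: "uniform_limit P (\<lambda>n d. \<Sum>i<n. (L ^^ Suc i) (d i)) F sequentially"
    unfolding F_def
  proof (rule Weierstrass_m_test[OF _ summ_geo[of M]])
    fix n and d :: "nat \<Rightarrow> real^2" assume "d \<in> P"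
    then show "norm ((L ^^ Suc n) (d n)) \<le> K * r ^ Suc n * M" using M P term_bound by auto
  qed
  have "continuous_on P (\<lambda>d. \<Sum>i<n. (L ^^ Suc i) (d i))" for n
  proof (intro continuous_on_sum)
    fix i
    have c1: "continuous_on P (\<lambda>d::nat \<Rightarrow> real^2. d i)"
      by (rule continuous_on_subset[OF continuous_on_product_coordinates]) simp
    have c2: "continuous_on ((\<lambda>d::nat \<Rightarrow> real^2. d i) ` P) (L ^^ Suc i)" by (rule cont_pow)
    show "continuous_on P (\<lambda>d. (L ^^ Suc i) (d i))"
      using continuous_on_compose[OF c1 c2] by (simp add: o_def del: funpow.simps)
  qed
  then have "continuous_on P F" using ul by (intro uniform_limit_theorem) auto
  then have "compact (F ` P)" using cP compact_continuous_image by blast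
  moreover have "F ` P = TS D"
  proof
    show "F ` P \<subseteq> TS D"
    proof
      fix x assume "x \<in> F ` P"
      then obtain d where d: "\<forall>i. d i \<in> D" and x: "x = F d" using P by auto
      have "summable (\<lambda>i. (L ^^ Suc i) (d i))" using d M by (intro summable_digits) auto
      then have "(\<lambda>i. (L ^^ Suc i) (d i)) sums x" unfolding x F_def by (rule summable_sums)
      then show "x \<in> TS D" unfolding TS_def using d by blast
    qed
    show "TS D \<subseteq> F ` P"
    proof
      fix x assume "x \<in> TS D"
      then obtain d where d: "\<forall>i. d i \<in> D" and s: "(\<lambda>i. (L ^^ Suc i) (d i)) sums x"
        unfolding TS_def by blast
      have "x = F d" unfolding F_def using s sums_unique by blast
      then show "x \<in> F ` P" using d P by blast
    qed
  qed
  ultimately show ?thesis by simp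
qed


lemma Phi_mono: "X \<subseteq> Y \<Longrightarrow> Phi D X \<subseteq> Phi D Y"
  unfolding Phi_def by blast

lemma aff_cont: "continuous_on S (\<lambda>y. L (y + d))"
proof -
  have eq: "(\<lambda>y. L (y + d)) = (\<lambda>y. L y + L d)" using linear_add[OF lin] by auto
  show ?thesis unfolding eq
    by (intro continuous_intros linear_continuous_on blL)
qed

lemma Phi_compact: "finite D \<Longrightarrow> compact Y \<Longrightarrow> compact (Phi D Y)"
  unfolding Phi_def by (intro compact_UN compact_continuous_image aff_cont) auto

lemma Phi_approx:
  assumes "Z \<noteq> {}"
  shows "x \<in> (Phi D ^^ n) Y \<Longrightarrow> \<exists>t\<in>(Phi D ^^ n) Z. \<exists>y\<in>Y. \<exists>z\<in>Z. x - t = (L^^n) (y - z)"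
proof (induction n arbitrary: x)
  case 0
  then show ?case using assms by auto
next
  case (Suc n)
  then have "x \<in> Phi D ((Phi D ^^ n) Y)" by simp
  then obtain d x' where d: "d \<in> D" and x': "x' \<in> (Phi D ^^ n) Y" and x: "x = L (x' + d)"
    unfolding Phi_iff by blast
  obtain t y z where t: "t \<in> (Phi D ^^ n) Z" and y: "y \<in> Y" and z: "z \<in> Z"
    and e: "x' - t = (L^^n) (y - z)" using Suc.IH[OF x'] by blast
  have "L (t + d) \<in> Phi D ((Phi D ^^ n) Z)" unfolding Phi_iff using t d by blast
  moreover have "x - L (t + d) = (L ^^ Suc n) (y - z)"
  proof -
    have "x - L (t + d) = L ((x' + d) - (t + d))" using x linear_diff[OF lin] by metis
    also have "(x' + d) - (t + d) = x' - t" by simp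
    finally show ?thesis using e by simp
  qed
  ultimately show ?case using y z by auto
qed

definition TT :: "(real^2) set \<Rightarrow> (real^2) set" where
  "TT D = {t - t' | t t'. t \<in> TS D \<and> t' \<in> TS D}"

lemma conn:
  assumes D: "D = {d0, d1, d2}" and a1: "d1 - d0 \<in> TT D"
    and a2: "d2 - d1 \<in> TT D \<or> d2 - d0 \<in> TT D"
  shows "connected (TS D)"
proof -
  define T where "T = TS D"
  have fin: "finite D" using D by simp
  have Tc: "compact T" unfolding T_def by (rule TS_compact[OF fin])
  have Tne: "T \<noteq> {}" unfolding T_def by (rule TS_nonempty) (use D fin in auto)
  have Tfix: "Phi D T = T" unfolding T_def by (rule TS_fix[OF fin])
  define X0 where "X0 = convex hull T"
  have X0c: "compact X0" unfolding X0_def using Tc compact_convex_hull by blast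
  have TX0: "T \<subseteq> X0" unfolding X0_def by (rule hull_subset)
  have PX0: "Phi D X0 \<subseteq> X0"
  proof -
    have "(\<lambda>y. L (y + d)) ` X0 \<subseteq> X0" if d: "d \<in> D" for d
    proof -
      have "(\<lambda>y. L (y + d)) ` X0 = L ` ((\<lambda>x. d + x) ` X0)" by (simp add: image_image add.commute)
      also have "\<dots> = L ` (convex hull ((\<lambda>x. d + x) ` T))"
        unfolding X0_def convex_hull_translation ..
      also have "\<dots> = convex hull (L ` ((\<lambda>x. d + x) ` T))" by (rule convex_hull_linear_image[OF lin])
      also have "L ` ((\<lambda>x. d + x) ` T) \<subseteq> T"
      proof -
        have "L ` ((\<lambda>x. d + x) ` T) \<subseteq> Phi D T"
        proof
          fix w assume "w \<in> L ` ((\<lambda>x. d + x) ` T)"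
          then obtain t where t: "t \<in> T" and w: "w = L (t + d)" by (auto simp: add.commute)
          show "w \<in> Phi D T" unfolding Phi_iff using t w d by blast
        qed
        then show ?thesis using Tfix by simp
      qed
      then have "convex hull (L ` ((\<lambda>x. d + x) ` T)) \<subseteq> X0" unfolding X0_def by (rule hull_mono)
      finally show ?thesis .
    qed
    then show ?thesis unfolding Phi_def by (intro UN_least)
  qed
  define X where "X n = (Phi D ^^ n) X0" for n
  have XT: "T \<subseteq> X n" for n
  proof (induction n)
    case 0 then show ?case using TX0 by (simp add: X_def)
  next
    case (Suc n)
    then have "Phi D T \<subseteq> Phi D (X n)" by (rule Phi_mono)
    then show ?case using Tfix by (simp add: X_def)
  qed
  have Xdec: "X (Suc n) \<subseteq> X n" for n
  proof (induction n)
    case 0 then show ?case using PX0 by (simp add: X_def)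
  next
    case (Suc n)
    then have "Phi D (X (Suc n)) \<subseteq> Phi D (X n)" by (rule Phi_mono)
    then show ?case by (simp add: X_def)
  qed
  have nest: "X n \<subseteq> X m" if "m \<le> n" for m n
    using lift_Suc_antimono_le[of X, OF Xdec that] .
  have Xc: "compact (X n)" for n
  proof (induction n)
    case 0 then show ?case using X0c by (simp add: X_def)
  next
    case (Suc n)
    then have "compact (Phi D (X n))" by (rule Phi_compact[OF fin])
    then show ?case by (simp add: X_def)
  qed
  have f_cont: "continuous_on Y (\<lambda>y. L (y + d))" for Y d by (rule aff_cont)
  have meet: "(\<lambda>y. L (y + a)) ` Y \<inter> (\<lambda>y. L (y + b)) ` Y \<noteq> {}"
    if "b - a \<in> TT D" "T \<subseteq> Y" for a b Y
  proof -
    from that(1) obtain t t' where t0: "t \<in> TS D" "t' \<in> TS D" and e: "b - a = t - t'"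
      unfolding TT_def by blast
    have t: "t \<in> T" "t' \<in> T" using t0 unfolding T_def by auto
    have "t + a = t' + b" using e by (simp add: algebra_simps)
    then have "L (t + a) = L (t' + b)" by simp
    moreover have "L (t + a) \<in> (\<lambda>y. L (y + a)) ` Y" using t that(2) by auto
    moreover have "L (t' + b) \<in> (\<lambda>y. L (y + b)) ` Y" using t that(2) by auto
    ultimately show ?thesis by (metis IntI empty_iff)
  qed
  have Xconn: "connected (X n)" for n
  proof (induction n)
    case 0 then show ?case unfolding X_def X0_def by (simp add: convex_connected)
  next
    case (Suc n)
    let ?f = "\<lambda>d. (\<lambda>y. L (y + d)) ` X n"
    have c: "connected (?f d)" for d
      using connected_continuous_image[OF f_cont Suc.IH] .
    have P: "Phi D (X n) = ?f d0 \<union> ?f d1 \<union> ?f d2" unfolding Phi_def D by auto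
    have m1: "?f d0 \<inter> ?f d1 \<noteq> {}" using meet[OF a1 XT] .
    have c01: "connected (?f d0 \<union> ?f d1)" using connected_Un[OF c c m1] .
    have "(?f d0 \<union> ?f d1) \<inter> ?f d2 \<noteq> {}"
      using a2 meet[OF _ XT, of d2 d1] meet[OF _ XT, of d2 d0] by blast
    then have "connected (?f d0 \<union> ?f d1 \<union> ?f d2)" using connected_Un[OF c01 c] by blast
    then show ?case using P by (simp add: X_def)
  qed
  have inter: "\<Inter> (range X) = T"
  proof
    show "T \<subseteq> \<Inter> (range X)" using XT by blast
    show "\<Inter> (range X) \<subseteq> T"
    proof
      fix x assume x: "x \<in> \<Inter> (range X)"
      obtain R where R: "\<forall>y\<in>X0. norm y \<le> R" using compact_imp_bounded[OF X0c] bounded_iff by blast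
      obtain t0 where t0: "t0 \<in> T" using Tne by blast
      have "norm t0 \<le> R" using R TX0 t0 by blast
      then have R0: "0 \<le> R" using norm_ge_zero[of t0] by linarith
      have "\<exists>t\<in>T. dist t x < e" if e: "e > 0" for e
      proof -
        have "0 < e / (2*K*R + 1)" using e K0 R0 by (simp add: add_nonneg_pos)
        then obtain n where n: "r ^ n < e / (2*K*R + 1)" using real_arch_pow_inv r1 by blast
        have "x \<in> X n" using x by blast
        then obtain t y z where t: "t \<in> (Phi D ^^ n) T" and y: "y \<in> X0" and z: "z \<in> T"
          and xt: "x - t = (L^^n) (y - z)" using Phi_approx[OF Tne, where x=x and n=n and Y=X0 and D=D] unfolding X_def by blast
        have tT: "(Phi D ^^ n) T = T" by (induction n) (simp_all add: Tfix)
        have ny: "norm y \<le> R" using R y by blast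
        have nz: "norm z \<le> R" using R z TX0 by blast
        have nyz: "norm (y - z) \<le> 2 * R"
          using ny nz norm_triangle_ineq4[of y z] by linarith
        have "dist t x = norm ((L^^n) (y - z))" using xt by (metis dist_norm dist_commute)
        also have "\<dots> \<le> K * r^n * norm (y - z)" by (rule decay)
        also have "\<dots> \<le> K * r^n * (2 * R)"
          using nyz K0 r0 by (intro mult_left_mono) auto
        finally have "dist t x \<le> K * r^n * (2 * R)" .
        also have "\<dots> \<le> (2*K*R + 1) * r^n" using r0 K0 R0 by (simp add: algebra_simps)
        also have "\<dots> < e"
        proof -
          have c: "0 < 2*K*R + 1" using K0 R0 by (simp add: add_nonneg_pos)
          have "r^n * (2*K*R + 1) < e" using n c by (simp only: pos_less_divide_eq)
          then show ?thesis by (simp only: mult.commute)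
        qed
        finally show ?thesis using t tT by auto
      qed
      then show "x \<in> T" using closed_approachable[OF compact_imp_closed[OF Tc]] by blast
    qed
  qed
  have "connected (\<Inter> (range X))" by (rule connected_nest[OF Xc Xconn nest])
  then show ?thesis using inter T_def by simp
qed


lemma lasso:
  fixes Aop :: "real^2 \<Rightarrow> real^2"
  assumes inv: "\<And>y. L (Aop y) = y" and finD: "finite D" and finS: "finite S"
    and step: "\<forall>s\<in>S. \<exists>s'\<in>S. Aop s - s' \<in> {a - b | a b. a \<in> D \<and> b \<in> D}"
    and s: "s \<in> S"
  shows "s \<in> TT D"
proof -
  obtain nx where nx: "\<forall>s\<in>S. nx s \<in> S \<and> Aop s - nx s \<in> {a - b | a b. a \<in> D \<and> b \<in> D}"
  proof -
    have "\<forall>s\<in>S. \<exists>s'. s' \<in> S \<and> Aop s - s' \<in> {a - b | a b. a \<in> D \<and> b \<in> D}" using step by blast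
    from bchoice[OF this] show ?thesis using that by blast
  qed
  define z where "z n = (nx ^^ n) s" for n
  have zS: "z n \<in> S" for n by (induction n) (use s nx in \<open>auto simp: z_def\<close>)
  have zSuc: "z (Suc n) = nx (z n)" for n by (simp add: z_def)
  define e where "e n = Aop (z n) - z (Suc n)" for n
  have "\<forall>n. \<exists>ab. fst ab \<in> D \<and> snd ab \<in> D \<and> e n = fst ab - snd ab"
  proof
    fix n
    have "e n \<in> {a - b | a b. a \<in> D \<and> b \<in> D}" using nx zS[of n] by (simp add: e_def zSuc)
    then show "\<exists>ab. fst ab \<in> D \<and> snd ab \<in> D \<and> e n = fst ab - snd ab" by auto
  qed
  then obtain ab where ab: "\<And>n. fst (ab n) \<in> D \<and> snd (ab n) \<in> D \<and> e n = fst (ab n) - snd (ab n)"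
    by metis
  define a where "a n = fst (ab n)" for n
  define b where "b n = snd (ab n)" for n
  have aD: "\<forall>n. a n \<in> D" and bD: "\<forall>n. b n \<in> D" and eab: "\<And>n. e n = a n - b n"
    using ab by (auto simp: a_def b_def)
  have part: "(\<Sum>i<n. (L ^^ Suc i) (e i)) = s - (L ^^ n) (z n)" for n
  proof (induction n)
    case 0 then show ?case by (simp add: z_def)
  next
    case (Suc n)
    have "(L ^^ Suc n) (e n) = (L ^^ Suc n) (Aop (z n)) - (L ^^ Suc n) (z (Suc n))"
      unfolding e_def by (rule linear_diff[OF lin_pow])
    also have "(L ^^ Suc n) (Aop (z n)) = (L ^^ n) (z n)"
      by (simp only: funpow_Suc_right o_def inv)
    finally show ?case using Suc.IH by simp
  qed
  obtain M where M: "\<forall>y\<in>S. norm y \<le> M" using finite_bound[OF finS] by blast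
  have "(\<lambda>n. (L ^^ n) (z n)) \<longlonglongrightarrow> 0"
  proof (rule Lim_null_comparison)
    show "\<forall>\<^sub>F n in sequentially. norm ((L ^^ n) (z n)) \<le> K * M * r ^ n"
    proof (rule always_eventually, rule allI)
      fix n
      have "norm ((L ^^ n) (z n)) \<le> K * r^n * norm (z n)" by (rule decay)
      also have "\<dots> \<le> K * r^n * M" using M zS[of n] K0 r0 by (intro mult_left_mono) auto
      finally show "norm ((L ^^ n) (z n)) \<le> K * M * r ^ n" by (simp add: algebra_simps)
    qed
    show "(\<lambda>n. K * M * r ^ n) \<longlonglongrightarrow> 0"
      using tendsto_mult_right_zero[OF LIMSEQ_power_zero[of r], of "K * M"] r0 r1 by auto
  qed
  then have "(\<lambda>n. s - (L ^^ n) (z n)) \<longlonglongrightarrow> s - 0" by (intro tendsto_intros)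
  then have es: "(\<lambda>i. (L ^^ Suc i) (e i)) sums s" unfolding sums_def part by simp
  obtain MD where MD: "\<forall>d\<in>D. norm d \<le> MD" using finite_bound[OF finD] by blast
  have "summable (\<lambda>i. (L ^^ Suc i) (a i))" using aD MD by (intro summable_digits) auto
  then obtain ta where ta: "(\<lambda>i. (L ^^ Suc i) (a i)) sums ta" using summable_sums by blast
  have "summable (\<lambda>i. (L ^^ Suc i) (b i))" using bD MD by (intro summable_digits) auto
  then obtain tb where tb: "(\<lambda>i. (L ^^ Suc i) (b i)) sums tb" using summable_sums by blast
  have taT: "ta \<in> TS D" unfolding TS_def using aD ta by blast
  have tbT: "tb \<in> TS D" unfolding TS_def using bD tb by blast
  have "(\<lambda>i. (L ^^ Suc i) (a i) - (L ^^ Suc i) (b i)) sums (ta - tb)" by (rule sums_diff[OF ta tb])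
  moreover have "(\<lambda>i. (L ^^ Suc i) (a i) - (L ^^ Suc i) (b i)) = (\<lambda>i. (L ^^ Suc i) (e i))"
    by (rule ext, simp only: eab linear_diff[OF lin_pow])
  ultimately have "s = ta - tb" using es sums_unique2 by metis
  then show ?thesis unfolding TT_def using taT tbT by blast
qed

end



lemma rec_closed:
  fixes p q :: real and m1 m2 :: complex and s :: "nat \<Rightarrow> real"
  assumes q: "q \<noteq> 0" and m1: "q * m1^2 + p * m1 + 1 = 0" and m2: "q * m2^2 + p * m2 + 1 = 0"
    and ne: "m1 \<noteq> m2"
    and rec: "\<And>n. q * s (Suc (Suc n)) + p * s (Suc n) + s n = 0"
  shows "complex_of_real (s n) = ((s 1 - m2 * s 0) / (m1 - m2)) * m1^n + ((m1 * s 0 - s 1) / (m1 - m2)) * m2^n"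
proof -
  define a where "a = (complex_of_real (s 1) - m2 * s 0) / (m1 - m2)"
  define b where "b = (m1 * complex_of_real (s 0) - s 1) / (m1 - m2)"
  have d: "m1 - m2 \<noteq> 0" using ne by simp
  have P: "complex_of_real (s n) = a * m1^n + b * m2^n \<and> complex_of_real (s (Suc n)) = a * m1^Suc n + b * m2^Suc n" for n
  proof (induction n)
    case 0
    have "a + b = ((complex_of_real (s 1) - m2 * s 0) + (m1 * complex_of_real (s 0) - s 1)) / (m1 - m2)"
      by (simp only: a_def b_def add_divide_distrib)
    also have "\<dots> = complex_of_real (s 0) * (m1 - m2) / (m1 - m2)" by (simp add: algebra_simps)
    also have "\<dots> = complex_of_real (s 0)" using d by simp
    finally have 0: "complex_of_real (s 0) = a * m1^0 + b * m2^0" by simp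
    have "a * m1 + b * m2 = ((complex_of_real (s 1) - m2 * s 0) * m1 + (m1 * complex_of_real (s 0) - s 1) * m2) / (m1 - m2)"
      by (simp only: a_def b_def add_divide_distrib times_divide_eq_left)
    also have "\<dots> = complex_of_real (s 1) * (m1 - m2) / (m1 - m2)" by (simp add: algebra_simps)
    also have "\<dots> = complex_of_real (s 1)" using d by simp
    finally have 1: "complex_of_real (s (Suc 0)) = a * m1^Suc 0 + b * m2^Suc 0" by simp
    show ?case using 0 1 by simp
  next
    case (Suc n)
    have r: "complex_of_real (s (Suc (Suc n))) = - (p * s (Suc n) + s n) / q"
    proof -
      have "s (Suc (Suc n)) = - (p * s (Suc n) + s n) / q" using rec[of n] q by (simp add: field_simps)
      then show ?thesis by simp
    qed
    have e1: "m1^2 = - (p * m1 + 1) / q" using m1 q by (simp add: field_simps) (metis add.commute add_eq_0_iff mult.commute)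
    have e2: "m2^2 = - (p * m2 + 1) / q" using m2 q by (simp add: field_simps) (metis add.commute add_eq_0_iff mult.commute)
    have "a * m1^Suc (Suc n) + b * m2^Suc (Suc n) = a * m1^n * m1^2 + b * m2^n * m2^2"
      by (simp add: power2_eq_square algebra_simps)
    also have "\<dots> = - (p * (a * m1^Suc n + b * m2^Suc n) + (a * m1^n + b * m2^n)) / q"
      using q by (simp add: e1 e2 field_simps)
    also have "\<dots> = complex_of_real (s (Suc (Suc n)))" using Suc.IH r by simp
    finally show ?case using Suc.IH by simp
  qed
  then show ?thesis unfolding a_def b_def by blast
qed


lemma rec_bound:
  fixes p q :: real and m1 m2 :: complex and s :: "nat \<Rightarrow> real"
  assumes q: "q \<noteq> 0" and m1: "q * m1^2 + p * m1 + 1 = 0" and m2: "q * m2^2 + p * m2 + 1 = 0"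
    and ne: "m1 \<noteq> m2" and n1: "norm m1 < 1" and n2: "norm m2 < 1"
    and rec: "\<And>n. q * s (Suc (Suc n)) + p * s (Suc n) + s n = 0"
  shows "\<bar>s n\<bar> \<le> (2 / norm (m1 - m2)) * (\<bar>s 0\<bar> + \<bar>s 1\<bar>) * (max (norm m1) (norm m2))^n"
proof -
  define R where "R = max (norm m1) (norm m2)"
  define dd where "dd = norm (m1 - m2)"
  have dd: "dd > 0" using ne by (simp add: dd_def)
  define a where "a = (complex_of_real (s 1) - m2 * s 0) / (m1 - m2)"
  define b where "b = (m1 * complex_of_real (s 0) - s 1) / (m1 - m2)"
  have cf: "complex_of_real (s n) = a * m1^n + b * m2^n"
    unfolding a_def b_def by (rule rec_closed[where p=p and q=q and s=s and ?m1.0=m1 and ?m2.0=m2 and n=n, OF q m1 m2 ne rec])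
  have na: "norm a \<le> (\<bar>s 0\<bar> + \<bar>s 1\<bar>) / dd"
  proof -
    have "norm (complex_of_real (s 1) - m2 * s 0) \<le> \<bar>s 1\<bar> + norm m2 * \<bar>s 0\<bar>"
      using norm_triangle_ineq4[of "complex_of_real (s 1)" "m2 * s 0"] by (simp add: norm_mult)
    also have "\<dots> \<le> \<bar>s 1\<bar> + 1 * \<bar>s 0\<bar>" using n2 by (intro add_left_mono mult_right_mono) auto
    finally show ?thesis unfolding a_def dd_def using dd dd_def by (simp add: norm_divide divide_right_mono)
  qed
  have nb: "norm b \<le> (\<bar>s 0\<bar> + \<bar>s 1\<bar>) / dd"
  proof -
    have "norm (m1 * complex_of_real (s 0) - s 1) \<le> norm m1 * \<bar>s 0\<bar> + \<bar>s 1\<bar>"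
      using norm_triangle_ineq4[of "m1 * complex_of_real (s 0)" "complex_of_real (s 1)"] by (simp add: norm_mult)
    also have "\<dots> \<le> 1 * \<bar>s 0\<bar> + \<bar>s 1\<bar>" using n1 by (intro add_right_mono mult_right_mono) auto
    finally show ?thesis unfolding b_def dd_def using dd dd_def by (simp add: norm_divide divide_right_mono)
  qed
  have p1: "norm m1 ^ n \<le> R ^ n" unfolding R_def by (intro power_mono) auto
  have p2: "norm m2 ^ n \<le> R ^ n" unfolding R_def by (intro power_mono) auto
  have "\<bar>s n\<bar> = norm (a * m1^n + b * m2^n)" using cf by (metis norm_of_real)
  also have "\<dots> \<le> norm a * norm m1 ^ n + norm b * norm m2 ^ n"
    using norm_triangle_ineq[of "a * m1^n" "b * m2^n"] by (simp add: norm_mult norm_power)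
  also have "\<dots> \<le> (\<bar>s 0\<bar> + \<bar>s 1\<bar>) / dd * R^n + (\<bar>s 0\<bar> + \<bar>s 1\<bar>) / dd * R^n"
    using na nb p1 p2 dd by (intro add_mono mult_mono) auto
  also have "\<dots> = (2 / dd) * (\<bar>s 0\<bar> + \<bar>s 1\<bar>) * R^n" by (simp add: field_simps)
  finally show ?thesis unfolding R_def dd_def .
qed


lemma mv2: "((A::real^2^2) *v x) $ i = A$i$1 * x$1 + A$i$2 * x$2"
  by (simp add: matrix_vector_mult_def sum_2)

lemma charpoly_coeffs:
  assumes "charpoly2 A = [: of_int q, of_int p, 1 :]"
  shows "A$1$1 * A$2$2 - A$1$2 * A$2$1 = of_int q" "- (A$1$1 + A$2$2) = of_int p"
  using assms unfolding charpoly2_def by simp_all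

lemma CH:
  assumes "charpoly2 A = [: of_int q, of_int p, 1 :]"
  shows "A *v (A *v x) = (- of_int p) *\<^sub>R (A *v x) - of_int q *\<^sub>R x"
proof -
  note c = charpoly_coeffs[OF assms]
  have "(A *v (A *v x)) $ i = ((- of_int p) *\<^sub>R (A *v x) - of_int q *\<^sub>R x) $ i" for i
  proof -
    have "(A *v (A *v x)) $ i = A$i$1 * (A$1$1 * x$1 + A$1$2 * x$2) + A$i$2 * (A$2$1 * x$1 + A$2$2 * x$2)"
      by (simp add: mv2)
    moreover have "((- of_int p) *\<^sub>R (A *v x) - of_int q *\<^sub>R x) $ i
       = (A$1$1 + A$2$2) * (A$i$1 * x$1 + A$i$2 * x$2) - (A$1$1 * A$2$2 - A$1$2 * A$2$1) * x$i"
      by (simp add: mv2 c(1)[symmetric] c(2)[symmetric] algebra_simps)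
    moreover have "i = 1 \<or> i = 2" using exhaust_2 by blast
    ultimately show ?thesis by (auto simp: algebra_simps)
  qed
  then show ?thesis by (simp add: vec_eq_iff)
qed

lemma det_q:
  assumes "charpoly2 A = [: of_int q, of_int p, 1 :]"
  shows "det A = of_int q"
  using charpoly_coeffs(1)[OF assms] by (simp add: det_2)

lemma inv_props:
  assumes "det (A::real^2^2) \<noteq> 0"
  shows "\<And>y. matrix_inv A *v (A *v y) = y" "\<And>y. A *v (matrix_inv A *v y) = y"
proof -
  have "invertible A" using assms invertible_det_nz by blast
  then have "\<exists>A'. A ** A' = mat 1 \<and> A' ** A = mat 1" unfolding invertible_def by blast
  then have i: "A ** matrix_inv A = mat 1 \<and> matrix_inv A ** A = mat 1"
    unfolding matrix_inv_def by (rule someI_ex)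
  fix y
  show "matrix_inv A *v (A *v y) = y" using i by (simp add: matrix_vector_mul_assoc)
  show "A *v (matrix_inv A *v y) = y" using i by (simp add: matrix_vector_mul_assoc)
qed


lemma mvc: "map_matrix complex_of_real (A::real^2^2) *v (\<chi> i. complex_of_real (u $ i))
   = (\<chi> i. complex_of_real ((A *v u) $ i))"
  by (simp add: vec_eq_iff matrix_vector_mult_def sum_2)

lemma eig:
  fixes A :: "real^2^2"
  assumes ch: "charpoly2 A = [: of_int q, of_int p, 1 :]"
    and ind: "independent {v, A *v v}" and ne: "v \<noteq> A *v v"
    and z: "z^2 + of_int p * z + of_int q = (0::complex)"
  shows "eigenvalue A z"
proof -
  define \<mu> where "\<mu> = - of_int p - z"
  define w where "w = (\<chi> i. complex_of_real ((A *v v) $ i) - \<mu> * complex_of_real (v $ i))"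
  have comp: "(map_matrix complex_of_real A *v w) $ i = (z *s w) $ i" for i
  proof -
    have E: "A$i$1 * (A *v v)$1 + A$i$2 * (A *v v)$2 = - of_int p * (A *v v)$i - of_int q * v$i"
      using arg_cong[OF CH[OF ch, of v], of "\<lambda>y. y $ i"] by (simp add: mv2)
    have F: "A$i$1 * v$1 + A$i$2 * v$2 = (A *v v)$i" by (simp add: mv2)
    have EC: "complex_of_real (A$i$1) * complex_of_real ((A *v v)$1) + complex_of_real (A$i$2) * complex_of_real ((A *v v)$2)
        = - of_int p * complex_of_real ((A *v v)$i) - of_int q * complex_of_real (v$i)"
      using arg_cong[OF E, of complex_of_real] by simp
    have FC: "complex_of_real (A$i$1) * complex_of_real (v$1) + complex_of_real (A$i$2) * complex_of_real (v$2)
        = complex_of_real ((A *v v)$i)"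
      using arg_cong[OF F, of complex_of_real] by simp
    have "(map_matrix complex_of_real A *v w) $ i
       = (complex_of_real (A$i$1) * complex_of_real ((A *v v)$1) + complex_of_real (A$i$2) * complex_of_real ((A *v v)$2))
         - \<mu> * (complex_of_real (A$i$1) * complex_of_real (v$1) + complex_of_real (A$i$2) * complex_of_real (v$2))"
      by (simp add: w_def matrix_vector_mult_def sum_2 algebra_simps)
    also have "\<dots> = - of_int p * complex_of_real ((A *v v)$i) - of_int q * complex_of_real (v$i)
         - \<mu> * complex_of_real ((A *v v)$i)" by (simp only: EC FC)
    also have "\<dots> = z * complex_of_real ((A *v v)$i) - (- of_int p * z - z^2) * complex_of_real (v$i)"
    proof -
      have "(of_int q::complex) = (z^2 + of_int p * z + of_int q) - z^2 - of_int p * z" by simp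
      also have "\<dots> = - of_int p * z - z^2" using z by simp
      finally have zq: "- of_int p * z - z^2 = (of_int q::complex)" by simp
      show ?thesis by (simp only: zq) (simp add: \<mu>_def algebra_simps)
    qed
    also have "\<dots> = (z *s w) $ i" by (simp add: w_def \<mu>_def algebra_simps power2_eq_square)
    finally show ?thesis .
  qed
  have wne: "w \<noteq> 0"
  proof
    assume w0: "w = 0"
    have "v \<noteq> 0" using ind dependent_zero by blast
    then obtain i where vi: "v $ i \<noteq> 0" by (auto simp: vec_eq_iff)
    have wi: "complex_of_real ((A *v v) $ j) = \<mu> * complex_of_real (v $ j)" for j
      using arg_cong[OF w0, of "\<lambda>y. y $ j"] by (simp add: w_def)
    define m where "m = (A *v v) $ i / v $ i"
    have "\<mu> = complex_of_real m" using wi[of i] vi by (simp add: m_def field_simps)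
    then have "(A *v v) $ j = m * v $ j" for j using wi[of j] by (metis of_real_eq_iff of_real_mult)
    then have Am: "A *v v = m *\<^sub>R v" by (simp add: vec_eq_iff)
    have "{v, A *v v} = insert (A *v v) {v}" by auto
    then have "independent (insert (A *v v) {v})" using ind by simp
    then have "A *v v \<notin> span {v}" using ne unfolding independent_insert[of "A *v v" "{v}"] by (auto split: if_splits)
    moreover have "m *\<^sub>R v \<in> span {v}" by (simp add: span_base span_mul)
    ultimately show False using Am by simp
  qed
  show ?thesis unfolding eigenvalue_def using wne comp by (auto simp: vec_eq_iff)
qed


lemma p_range:
  fixes p q :: int
  assumes rg: "\<And>z::complex. z^2 + of_int p * z + of_int q = 0 \<Longrightarrow> norm z > 1" and q: "\<bar>q\<bar> = 3"
  shows "(q = 3 \<and> -3 \<le> p \<and> p \<le> 3) \<or> (q = -3 \<and> -1 \<le> p \<and> p \<le> 1)"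
proof (rule ccontr)
  assume nc: "\<not> ?thesis"
  define f where "f x = x^2 + real_of_int p * x + real_of_int q" for x :: real
  have fc: "continuous_on S f" for S unfolding f_def by (intro continuous_intros)
  have le: "(-1::real) \<le> 0" "(0::real) \<le> 1" by simp_all
  have bad: "\<exists>x. -1 \<le> x \<and> x \<le> 1 \<and> f x = 0"
  proof -
    have "q = 3 \<or> q = -3" using q by auto
    then show ?thesis
    proof
      assume q3: "q = 3"
      then have "p \<ge> 4 \<or> p \<le> -4" using nc by auto
      then show ?thesis
      proof
        assume "p \<ge> 4"
        then have "f (-1) \<le> 0" "0 \<le> f 0" using q3 by (auto simp: f_def)
        from IVT'[of f "-1" 0 0, OF this le(1) fc] obtain x where x: "-1 \<le> x" "x \<le> 0" "f x = 0" by blast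
        then show ?thesis by (intro exI[of _ x]) simp
      next
        assume "p \<le> -4"
        then have "f 1 \<le> 0" "0 \<le> f 0" using q3 by (auto simp: f_def)
        from IVT2'[of f 1 0 0, OF this le(2) fc] obtain x where x: "0 \<le> x" "x \<le> 1" "f x = 0" by blast
        then show ?thesis by (intro exI[of _ x]) simp
      qed
    next
      assume q3: "q = -3"
      then have "p \<ge> 2 \<or> p \<le> -2" using nc by auto
      then show ?thesis
      proof
        assume "p \<ge> 2"
        then have "f 0 \<le> 0" "0 \<le> f 1" using q3 by (auto simp: f_def)
        from IVT'[of f 0 0 1, OF this le(2) fc] obtain x where x: "0 \<le> x" "x \<le> 1" "f x = 0" by blast
        then show ?thesis by (intro exI[of _ x]) simp
      next
        assume "p \<le> -2"
        then have "f 0 \<le> 0" "0 \<le> f (-1)" using q3 by (auto simp: f_def)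
        from IVT2'[of f 0 0 "-1", OF this le(1) fc] obtain x where x: "-1 \<le> x" "x \<le> 0" "f x = 0" by blast
        then show ?thesis by (intro exI[of _ x]) simp
      qed
    qed
  qed
  then obtain x where x: "-1 \<le> x" "x \<le> 1" "f x = 0" by blast
  have "(complex_of_real x)^2 + of_int p * complex_of_real x + of_int q = complex_of_real (f x)"
    by (simp add: f_def)
  then have "(complex_of_real x)^2 + of_int p * complex_of_real x + of_int q = 0" using x(3) by simp
  then have "norm (complex_of_real x) > 1" by (rule rg)
  then have "\<bar>x\<bar> > 1" by simp
  then show False using x by linarith
qed

lemma decay_exists:
  fixes p q :: int and L :: "real^2 \<Rightarrow> real^2"
  assumes rg: "\<And>z::complex. z^2 + of_int p * z + of_int q = 0 \<Longrightarrow> norm z > 1"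
    and q0: "q \<noteq> 0" and disc: "p^2 - 4*q \<noteq> 0" and lin: "linear L"
    and LL: "\<And>x. L (L x) = - (1 / real_of_int q) *\<^sub>R (x + real_of_int p *\<^sub>R L x)"
  shows "\<exists>K r. 0 \<le> K \<and> 0 < r \<and> r < 1 \<and> (\<forall>n x. norm ((L^^n) x) \<le> K * r^n * norm x)"
proof -
  define w where "w = csqrt (of_int (p^2 - 4*q))"
  have w2: "w^2 = of_int (p^2 - 4*q)" unfolding w_def by simp
  have wne: "w \<noteq> 0" unfolding w_def csqrt_eq_0 using disc by (metis of_int_eq_0_iff)
  define z1 where "z1 = (- of_int p + w) / 2"
  define z2 where "z2 = (- of_int p - w) / 2"
  have r1: "z1^2 + of_int p * z1 + of_int q = 0"
    unfolding z1_def by (simp add: power2_eq_square field_simps w2[unfolded power2_eq_square])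
  have r2: "z2^2 + of_int p * z2 + of_int q = 0"
    unfolding z2_def by (simp add: power2_eq_square field_simps w2[unfolded power2_eq_square])
  have zne: "z1 \<noteq> z2" using wne by (simp add: z1_def z2_def field_simps)
  have n1: "norm z1 > 1" using rg r1 by blast
  have n2: "norm z2 > 1" using rg r2 by blast
  define m1 where "m1 = 1 / z1"
  define m2 where "m2 = 1 / z2"
  have z10: "z1 \<noteq> 0" using n1 by auto
  have z20: "z2 \<noteq> 0" using n2 by auto
  have me1: "complex_of_real (of_int q) * m1^2 + complex_of_real (of_int p) * m1 + 1 = 0"
  proof -
    have "complex_of_real (of_int q) * m1^2 + complex_of_real (of_int p) * m1 + 1 = (z1^2 + of_int p * z1 + of_int q) / z1^2"
      using z10 by (simp add: m1_def field_simps power2_eq_square)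
    then show ?thesis using r1 by simp
  qed
  have me2: "complex_of_real (of_int q) * m2^2 + complex_of_real (of_int p) * m2 + 1 = 0"
  proof -
    have "complex_of_real (of_int q) * m2^2 + complex_of_real (of_int p) * m2 + 1 = (z2^2 + of_int p * z2 + of_int q) / z2^2"
      using z20 by (simp add: m2_def field_simps power2_eq_square)
    then show ?thesis using r2 by simp
  qed
  have mne: "m1 \<noteq> m2" using zne z10 z20 by (simp add: m1_def m2_def field_simps)
  have nm1: "norm m1 < 1" using n1 by (simp add: m1_def norm_divide divide_less_eq_1)
  have nm2: "norm m2 < 1" using n2 by (simp add: m2_def norm_divide divide_less_eq_1)
  define R where "R = max (norm m1) (norm m2)"
  define C where "C = 2 / norm (m1 - m2)"
  have "0 < norm m1" using z10 by (simp add: m1_def)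
  then have R0: "0 < R" by (simp add: R_def less_max_iff_disj)
  have R1: "R < 1" using nm1 nm2 by (simp add: R_def)
  have C0: "0 \<le> C" by (simp add: C_def)
  obtain CL where CL: "CL > 0" "\<And>x. norm (L x) \<le> norm x * CL"
    using bounded_linear.pos_bounded[OF lin[unfolded linear_conv_bounded_linear]] by blast
  have qr: "real_of_int q \<noteq> 0" using q0 by simp
  have comp: "\<bar>((L^^n) x) $ i\<bar> \<le> C * (\<bar>x $ i\<bar> + \<bar>L x $ i\<bar>) * R^n" for n x i
  proof -
    define s where "s k = ((L^^k) x) $ i" for k
    have rec: "real_of_int q * s (Suc (Suc k)) + real_of_int p * s (Suc k) + s k = 0" for k
    proof -
      have "(L^^Suc (Suc k)) x = L (L ((L^^k) x))" by simp
      also have "\<dots> = - (1 / real_of_int q) *\<^sub>R ((L^^k) x + real_of_int p *\<^sub>R (L^^Suc k) x)" by (simp add: LL)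
      finally have "s (Suc (Suc k)) = - (1 / real_of_int q) * (s k + real_of_int p * s (Suc k))"
        unfolding s_def by simp
      then show ?thesis using qr by (simp add: field_simps)
    qed
    have "\<bar>s n\<bar> \<le> C * (\<bar>s 0\<bar> + \<bar>s 1\<bar>) * R^n"
      unfolding C_def R_def by (rule rec_bound[where p="real_of_int p" and q="real_of_int q" and s=s, OF qr _ _ mne nm1 nm2 rec]) (use me1 me2 in simp_all)
    then show ?thesis by (simp add: s_def)
  qed
  have "norm ((L^^n) x) \<le> (2 * C * (1 + CL)) * R^n * norm x" for n x
  proof -
    have b: "\<bar>x $ i\<bar> + \<bar>L x $ i\<bar> \<le> (1 + CL) * norm x" for i
      using component_le_norm_cart[of x i] component_le_norm_cart[of "L x" i] CL(2)[of x]
      by (simp add: algebra_simps)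
    have "norm ((L^^n) x) \<le> (\<Sum>i\<in>UNIV. \<bar>((L^^n) x) $ i\<bar>)" by (rule norm_le_l1_cart)
    also have "\<dots> \<le> (\<Sum>i\<in>(UNIV::2 set). C * ((1 + CL) * norm x) * R^n)"
    proof (rule sum_mono)
      fix i
      have "\<bar>((L^^n) x) $ i\<bar> \<le> C * (\<bar>x $ i\<bar> + \<bar>L x $ i\<bar>) * R^n" by (rule comp)
      also have "\<dots> \<le> C * ((1 + CL) * norm x) * R^n"
        using b[of i] C0 R0 by (intro mult_right_mono mult_left_mono) auto
      finally show "\<bar>((L^^n) x) $ i\<bar> \<le> C * ((1 + CL) * norm x) * R^n" .
    qed
    also have "\<dots> = (2 * C * (1 + CL)) * R^n * norm x" by (simp add: sum_2 algebra_simps)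
    finally show ?thesis .
  qed
  moreover have "0 \<le> 2 * C * (1 + CL)" using C0 CL by simp
  ultimately show ?thesis using R0 R1 by blast
qed


definition lchk :: "int \<Rightarrow> int \<Rightarrow> (int \<times> int) list \<Rightarrow> (int \<times> int) list \<Rightarrow> bool" where
  "lchk p q dl zs \<longleftrightarrow> (\<forall>(a,b)\<in>set zs. \<exists>(a',b')\<in>set zs. (- q*b - a', a - p*b - b') \<in> set dl)"

definition cvec :: "real^2^2 \<Rightarrow> real^2 \<Rightarrow> int \<times> int \<Rightarrow> real^2" where
  "cvec A v ab = real_of_int (fst ab) *\<^sub>R v + real_of_int (snd ab) *\<^sub>R (A *v v)"

lemma cvec_A:
  assumes ch: "charpoly2 A = [: of_int q, of_int p, 1 :]"
  shows "A *v cvec A v (a, b) = cvec A v (- q * b, a - p * b)"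
proof -
  have "A *v cvec A v (a, b) = real_of_int a *\<^sub>R (A *v v) + real_of_int b *\<^sub>R (A *v (A *v v))"
    by (simp add: cvec_def matrix_vector_right_distrib matrix_vector_mult_scaleR)
  also have "\<dots> = cvec A v (- q * b, a - p * b)"
    by (simp add: CH[OF ch] cvec_def algebra_simps)
  finally show ?thesis .
qed

lemma cvec_diff: "cvec A v (a, b) - cvec A v (a', b') = cvec A v (a - a', b - b')"
  by (simp add: cvec_def algebra_simps)

lemma final:
  fixes A :: "real^2^2" and p q :: int and v :: "real^2"
  assumes "integer_matrix A"
    and ex: "expanding A"
    and ch: "charpoly2 A = [: of_int q, of_int p, 1 :]"
    and q3: "\<bar>q\<bar> = 3"
    and ind: "independent {v, A *v v}" and ne: "v \<noteq> A *v v"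
    and disc: "p^2 - 4*q \<noteq> 0"
    and c1: "lchk p q [(0,0),(1,0),(-1,0),(0,1),(0,-1),(1,1),(-1,-1)] zs1" "(1,0) \<in> set zs1"
      "(0,1) \<in> set zs1 \<or> (1,1) \<in> set zs1"
    and c2: "lchk p q [(0,0),(1,0),(-1,0),(0,1),(0,-1),(1,-1),(-1,1)] zs2" "(1,0) \<in> set zs2"
      "(0,-1) \<in> set zs2 \<or> (1,-1) \<in> set zs2"
  shows "connected (self_affine A {0, v, A *v v + v}) \<and>
         connected (self_affine A {0, v, - (A *v v) + v})"
proof -
  have q0: "q \<noteq> 0" using q3 by auto
  have detA: "det A \<noteq> 0" using det_q[OF ch] q0 by simp
  define L where "L = (\<lambda>x. matrix_inv A *v x)"
  have linL: "linear L" unfolding L_def by (rule matrix_vector_mul_linear)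
  have LA: "\<And>y. L (A *v y) = y" unfolding L_def by (rule inv_props(1)[OF detA])
  have AL: "\<And>y. A *v (L y) = y" unfolding L_def by (rule inv_props(2)[OF detA])
  have LL: "L (L x) = - (1 / real_of_int q) *\<^sub>R (x + real_of_int p *\<^sub>R L x)" for x
  proof -
    define y where "y = L (L x)"
    have "x = A *v (A *v y)" by (simp add: y_def AL)
    also have "\<dots> = (- real_of_int p) *\<^sub>R L x - real_of_int q *\<^sub>R y"
      by (simp only: CH[OF ch]) (simp add: y_def AL)
    finally have h: "x + real_of_int q *\<^sub>R y = - (real_of_int p *\<^sub>R L x)" by (simp add: algebra_simps)
    have "real_of_int q *\<^sub>R y + real_of_int p *\<^sub>R L x = - x" using h by (simp add: equation_minus_iff)
    then have "real_of_int q *\<^sub>R y = - (x + real_of_int p *\<^sub>R L x)" by (simp add: algebra_simps)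
    then have "(1 / real_of_int q) *\<^sub>R (real_of_int q *\<^sub>R y) = (1 / real_of_int q) *\<^sub>R (- (x + real_of_int p *\<^sub>R L x))"
      by (simp only:)
    then show ?thesis using q0 by (simp add: y_def algebra_simps)
  qed
  have rg: "norm z > 1" if "z^2 + of_int p * z + of_int q = 0" for z :: complex
    using ex eig[OF ch ind ne that] unfolding expanding_def by blast
  obtain K r where Kr: "0 \<le> K" "0 < r" "r < 1" "\<And>n x. norm ((L^^n) x) \<le> K * r^n * norm x"
    using decay_exists[OF rg q0 disc linL LL] by blast
  interpret sa L K r by (rule sa.intro[OF linL Kr(2) Kr(3) Kr(1) Kr(4)])
  have SA: "self_affine A D = TS D" for D unfolding self_affine_def TS_def by (simp add: L_def)
  have TTI: "cvec A v t \<in> TT D"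
    if dlD: "\<forall>(a,b)\<in>set dl. cvec A v (a,b) \<in> {x - y | x y. x \<in> D \<and> y \<in> D}"
       and chk: "lchk p q dl zs" and t: "t \<in> set zs" and finD: "finite D" for dl zs t D
  proof (rule lasso[where Aop = "\<lambda>y. A *v y" and S = "cvec A v ` set zs"])
    show "\<And>y. L (A *v y) = y" by (rule LA)
    show "finite D" by fact
    show "finite (cvec A v ` set zs)" by simp
    show "cvec A v t \<in> cvec A v ` set zs" using t by simp
    show "\<forall>s\<in>cvec A v ` set zs. \<exists>s'\<in>cvec A v ` set zs. A *v s - s' \<in> {a - b |a b. a \<in> D \<and> b \<in> D}"
    proof
      fix s assume "s \<in> cvec A v ` set zs"
      then obtain a b where ab: "(a,b) \<in> set zs" and s: "s = cvec A v (a,b)" by auto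
      then obtain a' b' where ab': "(a',b') \<in> set zs" and d: "(- q*b - a', a - p*b - b') \<in> set dl"
        using chk unfolding lchk_def by blast
      have "A *v s - cvec A v (a',b') = cvec A v (- q*b - a', a - p*b - b')"
        by (simp add: s cvec_A[OF ch] cvec_diff)
      then show "\<exists>s'\<in>cvec A v ` set zs. A *v s - s' \<in> {a - b |a b. a \<in> D \<and> b \<in> D}"
        using dlD d ab' by (metis (no_types, lifting) case_prodD image_eqI)
    qed
  qed
  have e10: "cvec A v (1,0) = v" by (simp add: cvec_def)
  have e01: "cvec A v (0,1) = A *v v" by (simp add: cvec_def)
  have e11: "cvec A v (1,1) = A *v v + v" by (simp add: cvec_def)
  have e0m: "cvec A v (0,-1) = - (A *v v)" by (simp add: cvec_def)
  have e1m: "cvec A v (1,-1) = - (A *v v) + v" by (simp add: cvec_def)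
  have part1: "connected (TS {0, v, A *v v + v})"
  proof (rule conn[of "{0, v, A *v v + v}" 0 v "A *v v + v"])
    let ?D = "{0, v, A *v v + v}"
    have dlD: "\<forall>(a,b)\<in>set [(0,0),(1,0),(-1,0),(0,1),(0,-1),(1,1),(-1,-1)]. cvec A v (a,b) \<in> {x - y | x y. x \<in> ?D \<and> y \<in> ?D}"
    proof -
      have m: "x - y \<in> {x - y | x y. x \<in> ?D \<and> y \<in> ?D}" if "x \<in> ?D" "y \<in> ?D" for x y using that by blast
      show ?thesis
        using m[of 0 0] m[of v 0] m[of 0 v] m[of "A *v v + v" v] m[of v "A *v v + v"]
          m[of "A *v v + v" 0] m[of 0 "A *v v + v"]
        by (simp add: cvec_def algebra_simps)
    qed
    show "?D = {0, v, A *v v + v}" ..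
    show "v - 0 \<in> TT ?D" using TTI[OF dlD c1(1) c1(2)] e10 by simp
    show "A *v v + v - v \<in> TT ?D \<or> A *v v + v - 0 \<in> TT ?D"
      using c1(3) TTI[OF dlD c1(1), of "(0,1)"] TTI[OF dlD c1(1), of "(1,1)"] e01 e11 by auto
  qed
  have part2: "connected (TS {0, v, - (A *v v) + v})"
  proof (rule conn[of "{0, v, - (A *v v) + v}" 0 v "- (A *v v) + v"])
    let ?D = "{0, v, - (A *v v) + v}"
    have dlD: "\<forall>(a,b)\<in>set [(0,0),(1,0),(-1,0),(0,1),(0,-1),(1,-1),(-1,1)]. cvec A v (a,b) \<in> {x - y | x y. x \<in> ?D \<and> y \<in> ?D}"
    proof -
      have m: "x - y \<in> {x - y | x y. x \<in> ?D \<and> y \<in> ?D}" if "x \<in> ?D" "y \<in> ?D" for x y using that by blast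
      show ?thesis
        using m[of 0 0] m[of v 0] m[of 0 v] m[of "- (A *v v) + v" v] m[of v "- (A *v v) + v"]
          m[of "- (A *v v) + v" 0] m[of 0 "- (A *v v) + v"]
        by (simp add: cvec_def algebra_simps)
    qed
    show "?D = {0, v, - (A *v v) + v}" ..
    show "v - 0 \<in> TT ?D" using TTI[OF dlD c2(1) c2(2)] e10 by simp
    show "- (A *v v) + v - v \<in> TT ?D \<or> - (A *v v) + v - 0 \<in> TT ?D"
      using c2(3) TTI[OF dlD c2(1), of "(0,-1)"] TTI[OF dlD c2(1), of "(1,-1)"] e0m e1m by auto
  qed
  show ?thesis using part1 part2 SA by simp
qed


theorem corollary3p5:
  fixes A :: "real^2^2" and p q :: int and v :: "real^2"
  assumes "integer_matrix A"
    and "expanding A"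
    and "charpoly2 A = [: of_int q, of_int p, 1 :]"
    and "\<bar>q\<bar> = 3"
    and "independent {v, A *v v}" and "v \<noteq> A *v v"
  shows "connected (self_affine A {0, v, A *v v + v}) \<and>
         connected (self_affine A {0, v, - (A *v v) + v})"
proof -
  have rg: "norm z > 1" if "z^2 + of_int p * z + of_int q = 0" for z :: complex
    using assms(2) eig[OF assms(3) assms(5) assms(6) that] unfolding expanding_def by blast
  have "(q = 3 \<and> -3 \<le> p \<and> p \<le> 3) \<or> (q = -3 \<and> -1 \<le> p \<and> p \<le> 1)"
    by (rule p_range[OF rg assms(4)])
  then have "(q = 3 \<and> p = -3) \<or> (q = 3 \<and> p = -2) \<or> (q = 3 \<and> p = -1) \<or> (q = 3 \<and> p = 0) \<or> (q = 3 \<and> p = 1) \<or> (q = 3 \<and> p = 2) \<or> (q = 3 \<and> p = 3) \<or> (q = -3 \<and> p = -1) \<or> (q = -3 \<and> p = 0) \<or> (q = -3 \<and> p = 1)" by auto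
  then show ?thesis
  proof (elim disjE)
    assume c: "q = 3 \<and> p = -3"
    show ?thesis
      by (rule final[OF assms(1-6), of "[(-5,2),(-4,2),(0,0),(0,1),(1,0)]" "[(1,-1),(1,0),(3,-1)]"]) (use c in \<open>simp_all add: lchk_def\<close>)
  next
    assume c: "q = 3 \<and> p = -2"
    show ?thesis
      by (rule final[OF assms(1-6), of "[(-3,1),(-2,0),(0,0),(0,1),(1,-1),(1,0),(2,-1)]" "[(-2,0),(-2,1),(0,-1),(0,1),(1,0),(2,-1),(2,0)]"]) (use c in \<open>simp_all add: lchk_def\<close>)
  next
    assume c: "q = 3 \<and> p = -1"
    show ?thesis
      by (rule final[OF assms(1-6), of "[(-2,0),(-2,1),(0,0),(0,1),(1,-1),(1,0),(2,0)]" "[(-2,0),(0,-1),(0,1),(1,0),(2,0)]"]) (use c in \<open>simp_all add: lchk_def\<close>)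
  next
    assume c: "q = 3 \<and> p = 0"
    show ?thesis
      by (rule final[OF assms(1-6), of "[(-2,0),(0,0),(0,1),(1,-1),(1,0),(2,0)]" "[(-2,0),(0,-1),(1,0),(1,1),(2,0)]"]) (use c in \<open>simp_all add: lchk_def\<close>)
  next
    assume c: "q = 3 \<and> p = 1"
    show ?thesis
      by (rule final[OF assms(1-6), of "[(-2,0),(0,-1),(0,0),(0,1),(1,0),(2,0)]" "[(-2,0),(0,-1),(1,0),(2,1)]"]) (use c in \<open>simp_all add: lchk_def\<close>)
  next
    assume c: "q = 3 \<and> p = 2"
    show ?thesis
      by (rule final[OF assms(1-6), of "[(-2,-1),(0,0),(0,1),(1,0),(2,0)]" "[(-2,0),(0,-1),(1,0),(3,1)]"]) (use c in \<open>simp_all add: lchk_def\<close>)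
  next
    assume c: "q = 3 \<and> p = 3"
    show ?thesis
      by (rule final[OF assms(1-6), of "[(-2,-1),(0,0),(1,0),(1,1),(2,1)]" "[(-5,-2),(0,-1),(1,0),(4,2),(5,2)]"]) (use c in \<open>simp_all add: lchk_def\<close>)
  next
    assume c: "q = -3 \<and> p = -1"
    show ?thesis
      by (rule final[OF assms(1-6), of "[(0,0),(0,1),(1,0),(2,0)]" "[(-3,1),(1,-1),(1,0),(3,-1)]"]) (use c in \<open>simp_all add: lchk_def\<close>)
  next
    assume c: "q = -3 \<and> p = 0"
    show ?thesis
      by (rule final[OF assms(1-6), of "[(0,0),(0,1),(1,0),(2,0)]" "[(-2,0),(0,-1),(1,0)]"]) (use c in \<open>simp_all add: lchk_def\<close>)
  next
    assume c: "q = -3 \<and> p = 1"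
    show ?thesis
      by (rule final[OF assms(1-6), of "[(0,0),(1,0),(1,1),(3,1)]" "[(-2,0),(0,-1),(1,0)]"]) (use c in \<open>simp_all add: lchk_def\<close>)
  qed
qed


end
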